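(* For any $f,g\in[0,1]$ with $G(f)\ne G(g)$, where $G(h)=\overline{o}_1(h)^p\,\overline{o}_2(h)^{1-p}$, $$\lim_{n\to\infty}\mathbb{P}\big(W_0W_n(f)>V_0W_n(g)\big)=\begin{cases}1,& G(f)>G(g),\\ 0,& G(f)<G(g).\end{cases}$$
   Context: Fix real numbers $o_{11},o_{12},o_{21},o_{22}$ with $o_{11}>o_{12}\ge 0$, $o_{22}>o_{21}\ge 0$, $o_{11}>1$, $o_{22}>1$, and $p\in[0,1]$ (convention $0^0=1$). Let $x_1,x_2,\ldots$ be i.i.d. Bernoulli$(p)$. For $h\in[0,1]$ put $\overline{o}_1(h)=o_{11}h+o_{12}(1-h)$, $\overline{o}_2(h)=o_{21}h+o_{22}(1-h)$, and $W_n(h)=\prod_{i=1}^n\overline{o}_1(h)^{x_i}\overline{o}_2(h)^{1-x_i}$; both strategies use the same environment sequence. The random initial sizes $W_0,V_0$ are independent, each uniform on $[0,a]$ for some fixed $a>0$, and independent of $(x_i)$. *)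

theory Defs
  imports "HOL-Probability.Probability"
begin

text \<open>Real power with the convention 0^0 = 1 (Isabelle's powr has 0 powr 0 = 0).\<close>
definition pw :: "real \<Rightarrow> real \<Rightarrow> real" where
  "pw b e = (if e = 0 then 1 else b powr e)"

definition obar1 :: "real \<Rightarrow> real \<Rightarrow> real \<Rightarrow> real" where
  "obar1 o11 o12 h = o11 * h + o12 * (1 - h)"

definition obar2 :: "real \<Rightarrow> real \<Rightarrow> real \<Rightarrow> real" where
  "obar2 o21 o22 h = o21 * h + o22 * (1 - h)"

definition Gr :: "real \<Rightarrow> real \<Rightarrow> real \<Rightarrow> real \<Rightarrow> real \<Rightarrow> real \<Rightarrow> real" where
  "Gr o11 o12 o21 o22 p h = pw (obar1 o11 o12 h) p * pw (obar2 o21 o22 h) (1 - p)"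

text \<open>W_n(h) = prod_{i=1}^n obar1(h)^{x_i} obar2(h)^{1-x_i}, x_i in {0,1}
  (the factor is obar1(h) if x_i = 1 and obar2(h) if x_i = 0, matching 0^0 = 1).\<close>
definition Wn :: "real \<Rightarrow> real \<Rightarrow> real \<Rightarrow> real \<Rightarrow> (nat \<Rightarrow> 'a \<Rightarrow> real) \<Rightarrow> nat \<Rightarrow> real \<Rightarrow> 'a \<Rightarrow> real" where
  "Wn o11 o12 o21 o22 x n h \<omega> =
     (\<Prod>i\<in>{1..n}. if x i \<omega> = 1 then obar1 o11 o12 h else obar2 o21 o22 h)"

end

theory Submission
  imports Defs
begin

lemma Wn_eq: "Wn o11 o12 o21 o22 x n h \<omega> = obar1 o11 o12 h ^ card {i\<in>{1..n}. x i \<omega> = 1}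
   * obar2 o21 o22 h ^ (n - card {i\<in>{1..n}. x i \<omega> = 1})"
proof -
  have e1: "{1..n} \<inter> {i. x i \<omega> = 1} = {i\<in>{1..n}. x i \<omega> = 1}" by auto
  have e2: "{1..n} \<inter> - {i. x i \<omega> = 1} = {1..n} - {i\<in>{1..n}. x i \<omega> = 1}" by auto
  show ?thesis unfolding Wn_def prod.If_cases[OF finite_atLeastAtMost] e1 e2 prod_constant
    by (subst card_Diff_subset) auto
qed

lemma card_le_n: "card {i\<in>{1..n}. x i \<omega> = 1} \<le> n"
proof -
  have "card {i\<in>{1..n}. x i \<omega> = 1} \<le> card {1..n}" by (rule card_mono) auto
  then show ?thesis by simp
qed

lemma pointwise:
  fixes W V Wf Wg c :: real
  assumes "W > 0" "Wf > 0" "W * c > V" "Wf \<ge> Wg * c" "Wg \<ge> 0"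
  shows "W * Wf > V * Wg"
proof (cases "Wg = 0")
  case True then show ?thesis using assms by simp
next
  case False
  then have "Wg > 0" using assms by simp
  have "W * Wf \<ge> W * (Wg * c)" using assms by (intro mult_left_mono) auto
  moreover have "Wg * (W * c) > Wg * V" using \<open>Wg > 0\<close> assms by simp
  ultimately show ?thesis by (simp add: algebra_simps)
qed


lemma log_ineq:
  fixes k n p \<alpha> \<beta> \<delta> \<epsilon> :: real
  assumes d: "\<delta> = p*\<alpha> + (1-p)*\<beta>" "\<delta> > 0" and e: "\<epsilon> = \<delta>/(2*(\<bar>\<alpha>\<bar>+\<bar>\<beta>\<bar>+1))"
    and k: "\<bar>k - n*p\<bar> < n*\<epsilon>" and n: "n \<ge> 0"
  shows "n*(\<delta>/2) \<le> k*\<alpha> + (n-k)*\<beta>"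
proof -
  have e1: "k*\<alpha> + (n-k)*\<beta> = n*\<delta> + (k - n*p)*(\<alpha> - \<beta>)" by (simp add: d(1) algebra_simps)
  have ne: "n*\<epsilon> \<ge> 0" using k by linarith
  have "\<bar>(k - n*p)*(\<alpha>-\<beta>)\<bar> \<le> (n*\<epsilon>) * (\<bar>\<alpha>\<bar>+\<bar>\<beta>\<bar>)"
    unfolding abs_mult using k ne by (intro mult_mono) auto
  moreover have "\<epsilon>*(\<bar>\<alpha>\<bar>+\<bar>\<beta>\<bar>) \<le> \<delta>/2"
  proof -
    have q: "(\<bar>\<alpha>\<bar>+\<bar>\<beta>\<bar>)/(\<bar>\<alpha>\<bar>+\<bar>\<beta>\<bar>+1) \<le> 1" by simp
    have "\<epsilon>*(\<bar>\<alpha>\<bar>+\<bar>\<beta>\<bar>) = (\<delta>/2) * ((\<bar>\<alpha>\<bar>+\<bar>\<beta>\<bar>)/(\<bar>\<alpha>\<bar>+\<bar>\<beta>\<bar>+1))"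
      unfolding e by (simp add: field_simps)
    also have "\<dots> \<le> \<delta>/2" using q d(2) by (intro mult_left_le) auto
    finally show ?thesis .
  qed
  then have "n*(\<epsilon>*(\<bar>\<alpha>\<bar>+\<bar>\<beta>\<bar>)) \<le> n*(\<delta>/2)" using n by (intro mult_left_mono) auto
  ultimately have "\<bar>(k - n*p)*(\<alpha>-\<beta>)\<bar> \<le> n*(\<delta>/2)" using mult.assoc[of n \<epsilon> "\<bar>\<alpha>\<bar>+\<bar>\<beta>\<bar>"] by linarith
  moreover have "- ((k - n*p)*(\<alpha>-\<beta>)) \<le> \<bar>(k - n*p)*(\<alpha>-\<beta>)\<bar>" by (rule abs_ge_minus_self)
  moreover have "n*(\<delta>/2) = n*\<delta>/2" by simp
  ultimately show ?thesis unfolding e1 by linarith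
qed

lemma K_bounds:
  fixes k n p \<epsilon> :: real
  assumes p: "0 < p" "p < 1" and e: "\<epsilon> = min p (1-p) / 2" and k: "\<bar>k - n*p\<bar> < n*\<epsilon>" and n: "n \<ge> 1"
  shows "0 < k" "k < n"
proof -
  have a: "n*\<epsilon> \<le> n*(p/2)" using n e by (intro mult_left_mono) auto
  have b: "n*\<epsilon> \<le> n*((1-p)/2)" using n e by (intro mult_left_mono) auto
  have c: "n*p > 0" using n p by simp
  have d: "n*(p/2) = (n*p)/2" "n*((1-p)/2) = (n - n*p)/2" by (simp_all add: algebra_simps)
  show "0 < k" using a c d k by linarith
  have f: "n*p < n" using mult_strict_left_mono[of p 1 n] p n by simp
  have g: "k < n*p + n*\<epsilon>" using k by (simp add: abs_less_iff)
  have h: "2*(n*\<epsilon>) \<le> n - n*p" using b d(2) by simp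
  show "k < n" using g h f by linarith
qed

context prob_space begin
lemma prob_inter_tendsto1:
  assumes "\<And>n. S n \<in> events" "\<And>n. T n \<in> events" "\<And>n. E n \<in> events"
   "(\<lambda>n. prob (S n)) \<longlonglongrightarrow> 1" "(\<lambda>n. prob (T n)) \<longlonglongrightarrow> 1" 
   "eventually (\<lambda>n. S n \<inter> T n \<subseteq> E n) sequentially"
  shows "(\<lambda>n. prob (E n)) \<longlonglongrightarrow> 1"
proof (rule tendsto_sandwich[where f="\<lambda>n. prob (S n) + prob (T n) - 1" and h="\<lambda>n. 1"])
  have "prob (S n) + prob (T n) - 1 \<le> prob (E n)" if "S n \<inter> T n \<subseteq> E n" for n
  proof -
    have "prob (S n \<union> T n) = prob (S n) + prob (T n) - prob (S n \<inter> T n)"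
      using assms(1,2) by (intro measure_Un3) (auto simp: fmeasurable_def emeasure_finite less_top[symmetric])
    moreover have "prob (S n \<union> T n) \<le> 1" by simp
    moreover have "prob (S n \<inter> T n) \<le> prob (E n)"
      using that assms(3) by (intro finite_measure_mono) auto
    ultimately show ?thesis by linarith
  qed
  then show "eventually (\<lambda>n. prob (S n) + prob (T n) - 1 \<le> prob (E n)) sequentially"
    using assms(6) eventually_mono by force
  show "eventually (\<lambda>n. prob (E n) \<le> 1) sequentially" by simp
  show "(\<lambda>n. 1::real) \<longlonglongrightarrow> 1" by simp
  show "(\<lambda>n. prob (S n) + prob (T n) - 1) \<longlonglongrightarrow> 1"
    using tendsto_diff[OF tendsto_add[OF assms(4,5)] tendsto_const[of "1::real"]] by simp
qed

lemma exp_growth: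
  assumes [measurable]: "W \<in> borel_measurable M" "V \<in> borel_measurable M"
    and W1: "prob {\<omega>\<in>space M. W \<omega> > 0} = 1" and c: "c > 0"
  shows "(\<lambda>n. prob {\<omega>\<in>space M. W \<omega> > 0 \<and> W \<omega> * exp (real n * c) > V \<omega>}) \<longlonglongrightarrow> 1"
proof -
  let ?A = "\<lambda>n. {\<omega>\<in>space M. W \<omega> > 0 \<and> W \<omega> * exp (real n * c) > V \<omega>}"
  have "range ?A \<subseteq> sets M" by auto
  moreover have "incseq ?A"
  proof (rule incseq_SucI, safe)
    fix n \<omega> assume "W \<omega> > 0" "W \<omega> * exp (real n * c) > V \<omega>"
    moreover have "exp (real n * c) \<le> exp (real (Suc n) * c)" using c by simp
    ultimately show "W \<omega> * exp (real (Suc n) * c) > V \<omega>"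
      by (meson less_le_trans mult_left_mono less_imp_le)
  qed
  ultimately have "(\<lambda>n. prob (?A n)) \<longlonglongrightarrow> prob (\<Union>n. ?A n)"
    by (rule finite_Lim_measure_incseq)
  moreover have "(\<Union>n. ?A n) = {\<omega>\<in>space M. W \<omega> > 0}"
  proof safe
    fix \<omega> assume w: "\<omega> \<in> space M" "W \<omega> > 0"
    obtain n :: nat where n: "ln (\<bar>V \<omega>\<bar> / W \<omega> + 1) / c < real n"
      using reals_Archimedean2 by blast
    have "ln (\<bar>V \<omega>\<bar> / W \<omega> + 1) < real n * c" using n c by (simp add: field_simps)
    moreover have pos: "\<bar>V \<omega>\<bar> / W \<omega> + 1 > 0" using w by (simp add: add_nonneg_pos)
    ultimately have "exp (ln (\<bar>V \<omega>\<bar> / W \<omega> + 1)) < exp (real n * c)"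
      by (simp only: exp_less_cancel_iff)
    then have "\<bar>V \<omega>\<bar> / W \<omega> + 1 < exp (real n * c)" using pos by simp
    moreover have "V \<omega> / W \<omega> \<le> \<bar>V \<omega>\<bar> / W \<omega>"
      using w by (intro divide_right_mono) auto
    ultimately have "V \<omega> / W \<omega> < exp (real n * c)" by linarith
    then have "V \<omega> < W \<omega> * exp (real n * c)" using w by (simp add: divide_less_eq mult.commute)
    then show "\<omega> \<in> (\<Union>n. ?A n)" using w by blast
  qed
  ultimately show ?thesis using W1 by simp
qed

lemma wlln:
  fixes x :: "nat \<Rightarrow> 'a \<Rightarrow> real" and p \<epsilon> :: real
  assumes xm[measurable]: "\<And>i. x i \<in> borel_measurable M"
    and bern: "\<And>i. prob {\<omega>\<in>space M. x i \<omega> = 1} = p"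
    and pair: "\<And>i j. i \<noteq> j \<Longrightarrow> prob ({\<omega>\<in>space M. x i \<omega> = 1} \<inter> {\<omega>\<in>space M. x j \<omega> = 1}) = p * p"
    and e: "\<epsilon> > 0"
  shows "(\<lambda>n. prob {\<omega>\<in>space M. \<bar>real (card {i\<in>{1..n}. x i \<omega> = 1}) - real n * p\<bar> < real n * \<epsilon>}) \<longlonglongrightarrow> 1"
proof -
  define A where "A i = {\<omega>\<in>space M. x i \<omega> = 1}" for i
  have Aev[measurable]: "A i \<in> events" for i unfolding A_def by measurable
  define Z where "Z i = (indicator (A i) :: 'a \<Rightarrow> real)" for i
  define F where "F n \<omega> = (\<Sum>i\<in>{1..n}. Z i \<omega>)" for n \<omega>
  have Zm[measurable]: "Z i \<in> borel_measurable M" for i unfolding Z_def by measurable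
  have Fm[measurable]: "F n \<in> borel_measurable M" for n unfolding F_def by measurable
  have Zb: "0 \<le> Z i \<omega>" "Z i \<omega> \<le> 1" for i \<omega> unfolding Z_def by (auto simp: indicator_def)
  have Zint[simp]: "integrable M (Z i)" for i
    by (rule integrable_const_bound[where B=1]) (auto simp: Zb)
  have ZZint[simp]: "integrable M (\<lambda>\<omega>. Z i \<omega> * Z j \<omega>)" for i j
    by (rule integrable_const_bound[where B=1]) (auto simp: Zb mult_le_one abs_mult)
  have card: "real (card {i\<in>{1..n}. x i \<omega> = 1}) = F n \<omega>" if "\<omega> \<in> space M" for n \<omega>
  proof -
    have "F n \<omega> = (\<Sum>i\<in>{1..n}. if x i \<omega> = 1 then 1 else 0)"
      unfolding F_def Z_def A_def using that by (intro sum.cong) (auto simp: indicator_def)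
    also have "\<dots> = (\<Sum>i\<in>{i\<in>{1..n}. x i \<omega> = 1}. 1)"
      by (rule sum.inter_filter[symmetric]) simp
    also have "\<dots> = real (card {i\<in>{1..n}. x i \<omega> = 1})"
      by (rule real_of_card[symmetric])
    finally show ?thesis by (rule sym)
  qed
  have EZ: "expectation (Z i) = p" for i
    unfolding Z_def using bern[of i] Aev[of i] by (simp add: A_def)
  have EZZ: "expectation (\<lambda>\<omega>. Z i \<omega> * Z j \<omega>) = (if i = j then p else p * p)" for i j
  proof -
    have "(\<lambda>\<omega>. Z i \<omega> * Z j \<omega>) = indicator (A i \<inter> A j)"
      unfolding Z_def by (auto simp: indicator_def fun_eq_iff)
    then have "expectation (\<lambda>\<omega>. Z i \<omega> * Z j \<omega>) = prob (A i \<inter> A j)"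
      using Aev[of i] Aev[of j] by (simp add: Int_absorb2 sets.sets_into_space)
    then show ?thesis using pair[of i j] bern[of i] by (auto simp: A_def)
  qed
  have cov: "expectation (\<lambda>\<omega>. (Z i \<omega> - p) * (Z j \<omega> - p)) = (if i = j then p - p * p else 0)" for i j
  proof -
    have "(\<lambda>\<omega>. (Z i \<omega> - p) * (Z j \<omega> - p)) = (\<lambda>\<omega>. (Z i \<omega> * Z j \<omega> - p * Z i \<omega>) - (p * Z j \<omega> - p * p))"
      by (auto simp: fun_eq_iff algebra_simps)
    then have "expectation (\<lambda>\<omega>. (Z i \<omega> - p) * (Z j \<omega> - p)) = 
       (expectation (\<lambda>\<omega>. Z i \<omega> * Z j \<omega>) - p * expectation (Z i)) - (p * expectation (Z j) - p * p)"
      by (simp add: prob_space)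
    then show ?thesis using EZZ[of i j] EZ[of i] EZ[of j] by (auto simp: algebra_simps)
  qed
  have EF: "expectation (F n) = real n * p" for n
    unfolding F_def by (simp add: EZ)
  have varF: "variance (F n) = real n * (p - p * p)" for n
  proof -
    have "(\<lambda>\<omega>. (F n \<omega> - expectation (F n))\<^sup>2) = (\<lambda>\<omega>. \<Sum>i\<in>{1..n}. \<Sum>j\<in>{1..n}. (Z i \<omega> - p) * (Z j \<omega> - p))"
    proof
      fix \<omega>
      have "F n \<omega> - expectation (F n) = (\<Sum>i\<in>{1..n}. (Z i \<omega> - p))"
        unfolding EF F_def by (simp add: sum_subtractf)
      then show "(F n \<omega> - expectation (F n))\<^sup>2 = (\<Sum>i\<in>{1..n}. \<Sum>j\<in>{1..n}. (Z i \<omega> - p) * (Z j \<omega> - p))"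
        by (simp add: power2_eq_square sum_product)
    qed
    moreover have "integrable M (\<lambda>\<omega>. (Z i \<omega> - p) * (Z j \<omega> - p))" for i j
    proof -
      have "(\<lambda>\<omega>. (Z i \<omega> - p) * (Z j \<omega> - p)) = (\<lambda>\<omega>. (Z i \<omega> * Z j \<omega> - p * Z i \<omega>) - (p * Z j \<omega> - p * p))"
        by (auto simp: fun_eq_iff algebra_simps)
      then show ?thesis by simp
    qed
    ultimately have "variance (F n) = (\<Sum>i\<in>{1..n}. \<Sum>j\<in>{1..n}. expectation (\<lambda>\<omega>. (Z i \<omega> - p) * (Z j \<omega> - p)))"
      by (simp add: integral_sum)
    also have "\<dots> = (\<Sum>i\<in>{1..n}. p - p * p)"
      by (simp add: cov sum.delta)
    finally show ?thesis by simp
  qed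
  have Fsq: "integrable M (\<lambda>\<omega>. F n \<omega> ^ 2)" for n
  proof -
    have "(\<lambda>\<omega>. F n \<omega> ^ 2) = (\<lambda>\<omega>. \<Sum>i\<in>{1..n}. \<Sum>j\<in>{1..n}. Z i \<omega> * Z j \<omega>)"
      by (auto simp: fun_eq_iff F_def power2_eq_square sum_product)
    then show ?thesis by simp
  qed
  have pp: "p - p * p \<le> 1"
  proof -
    have "0 \<le> (p - 1/2)^2" by simp
    moreover have "(p - 1/2)^2 = p * p - p + 1/4" by (simp add: power2_eq_square algebra_simps)
    ultimately show ?thesis by linarith
  qed
  have bound: "prob {\<omega>\<in>space M. \<bar>real (card {i\<in>{1..n}. x i \<omega> = 1}) - real n * p\<bar> < real n * \<epsilon>}
      \<ge> 1 - 1 / (real n * \<epsilon>^2)" if n: "n \<ge> 1" for n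
  proof -
    have pos: "real n * \<epsilon> > 0" using n e by simp
    have "prob {\<omega>\<in>space M. \<bar>F n \<omega> - expectation (F n)\<bar> \<ge> real n * \<epsilon>} \<le> variance (F n) / (real n * \<epsilon>)\<^sup>2"
      by (rule Chebyshev_inequality[OF Fm Fsq pos])
    also have "\<dots> \<le> real n / (real n * \<epsilon>)\<^sup>2"
      unfolding varF using pp by (intro divide_right_mono) (auto intro: mult_left_le)
    also have "\<dots> = 1 / (real n * \<epsilon>^2)"
      using n e by (simp add: power2_eq_square field_simps)
    finally have le: "prob {\<omega>\<in>space M. \<bar>F n \<omega> - real n * p\<bar> \<ge> real n * \<epsilon>} \<le> 1 / (real n * \<epsilon>^2)"
      by (simp add: EF)
    have "{\<omega>\<in>space M. \<bar>real (card {i\<in>{1..n}. x i \<omega> = 1}) - real n * p\<bar> < real n * \<epsilon>}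
        = space M - {\<omega>\<in>space M. \<bar>F n \<omega> - real n * p\<bar> \<ge> real n * \<epsilon>}"
      using card by auto
    moreover have "{\<omega>\<in>space M. \<bar>F n \<omega> - real n * p\<bar> \<ge> real n * \<epsilon>} \<in> events" by measurable
    ultimately show ?thesis using le by (simp add: prob_compl)
  qed
  show ?thesis
  proof (rule tendsto_sandwich[where f="\<lambda>n. 1 - 1 / (real n * \<epsilon>^2)" and h="\<lambda>n. 1"])
    show "eventually (\<lambda>n. 1 - 1 / (real n * \<epsilon>^2) \<le> prob {\<omega>\<in>space M. \<bar>real (card {i\<in>{1..n}. x i \<omega> = 1}) - real n * p\<bar> < real n * \<epsilon>}) sequentially"
      using bound eventually_sequentially by blast
    show "eventually (\<lambda>n. prob {\<omega>\<in>space M. \<bar>real (card {i\<in>{1..n}. x i \<omega> = 1}) - real n * p\<bar> < real n * \<epsilon>} \<le> 1) sequentially"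
      by simp
    show "(\<lambda>n. 1::real) \<longlonglongrightarrow> 1" by simp
    have "(\<lambda>n. 1 / (real n * \<epsilon>^2)) \<longlonglongrightarrow> 0"
    proof -
      have eq: "\<And>n. 1 / (real n * \<epsilon>^2) = (1/\<epsilon>^2) * (1 / real n)" by simp
      show ?thesis unfolding eq by (rule tendsto_mult_right_zero[OF lim_1_over_n])
    qed
    then show "(\<lambda>n. 1 - 1 / (real n * \<epsilon>^2)) \<longlonglongrightarrow> 1"
      using tendsto_diff[OF tendsto_const[of "1::real"]] by fastforce
  qed
qed

lemma card_meas[measurable]:
  fixes x :: "nat \<Rightarrow> 'a \<Rightarrow> real"
  assumes [measurable]: "\<And>i. x i \<in> borel_measurable M"
  shows "(\<lambda>\<omega>. real (card {i\<in>{1..n}. x i \<omega> = 1})) \<in> borel_measurable M"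
proof -
  have "(\<lambda>\<omega>. \<Sum>i\<in>{1..n}. indicator {\<omega>\<in>space M. x i \<omega> = 1} \<omega> :: real) \<in> borel_measurable M"
    by measurable
  moreover have "(\<Sum>i\<in>{1..n}. indicator {\<omega>\<in>space M. x i \<omega> = 1} \<omega> :: real) = real (card {i\<in>{1..n}. x i \<omega> = 1})"
    if "\<omega> \<in> space M" for \<omega>
  proof -
    have "(\<Sum>i\<in>{1..n}. indicator {\<omega>\<in>space M. x i \<omega> = 1} \<omega> :: real) = (\<Sum>i\<in>{1..n}. if x i \<omega> = 1 then 1 else 0)"
      using that by (intro sum.cong) (auto simp: indicator_def)
    also have "\<dots> = (\<Sum>i\<in>{i\<in>{1..n}. x i \<omega> = 1}. 1)"
      by (rule sum.inter_filter[symmetric]) simp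
    also have "\<dots> = real (card {i\<in>{1..n}. x i \<omega> = 1})"
      by (rule real_of_card[symmetric])
    finally show ?thesis .
  qed
  ultimately show ?thesis by (rule measurable_cong[THEN iffD1, rotated])
qed

lemma Wn_meas[measurable]:
  fixes x :: "nat \<Rightarrow> 'a \<Rightarrow> real"
  assumes [measurable]: "\<And>i. x i \<in> borel_measurable M"
  shows "Wn o11 o12 o21 o22 x n h \<in> borel_measurable M"
  unfolding Wn_def
proof (intro borel_measurable_prod)
  fix i show "(\<lambda>\<omega>. if x i \<omega> = 1 then obar1 o11 o12 h else obar2 o21 o22 h) \<in> borel_measurable M"
    by measurable
qed

lemma wrapper:
  fixes x :: "nat \<Rightarrow> 'a \<Rightarrow> real" and W V :: "'a \<Rightarrow> real" and Wf Wg :: "nat \<Rightarrow> 'a \<Rightarrow> real"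
  assumes [measurable]: "W \<in> borel_measurable M" "V \<in> borel_measurable M"
    "\<And>n. Wf n \<in> borel_measurable M" "\<And>n. Wg n \<in> borel_measurable M"
    and W1: "prob {\<omega>\<in>space M. W \<omega> > 0} = 1"
    and Wg0: "\<And>n \<omega>. Wg n \<omega> \<ge> 0"
    and c: "c > 0" and S: "\<And>n. S n \<in> events" "(\<lambda>n. prob (S n)) \<longlonglongrightarrow> 1"
    and ev: "eventually (\<lambda>n. \<forall>\<omega>\<in>S n. Wf n \<omega> > 0 \<and> Wf n \<omega> \<ge> Wg n \<omega> * exp (real n * c)) sequentially"
  shows "(\<lambda>n. prob {\<omega>\<in>space M. W \<omega> * Wf n \<omega> > V \<omega> * Wg n \<omega>}) \<longlonglongrightarrow> 1"
proof -
  have Tev: "\<And>n. {\<omega>\<in>space M. W \<omega> > 0 \<and> W \<omega> * exp (real n * c) > V \<omega>} \<in> events" by measurable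
  have Eev: "\<And>n. {\<omega>\<in>space M. W \<omega> * Wf n \<omega> > V \<omega> * Wg n \<omega>} \<in> events" by measurable
  have "eventually (\<lambda>n. S n \<inter> {\<omega>\<in>space M. W \<omega> > 0 \<and> W \<omega> * exp (real n * c) > V \<omega>}
     \<subseteq> {\<omega>\<in>space M. W \<omega> * Wf n \<omega> > V \<omega> * Wg n \<omega>}) sequentially"
    using ev by eventually_elim (auto intro!: pointwise Wg0)
  then show ?thesis
    by (rule prob_inter_tendsto1[OF S(1) Tev Eev S(2) exp_growth[OF assms(1,2) W1 c]])
qed


lemma main:
  fixes x :: "nat \<Rightarrow> 'a \<Rightarrow> real" and W V :: "'a \<Rightarrow> real" and o11 o12 o21 o22 p f g :: real
  assumes xm[measurable]: "\<And>i. x i \<in> borel_measurable M"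
    and Wm[measurable]: "W \<in> borel_measurable M" and Vm[measurable]: "V \<in> borel_measurable M"
    and bern: "\<And>i. prob {\<omega>\<in>space M. x i \<omega> = 1} = p"
    and pair: "\<And>i j. i \<noteq> j \<Longrightarrow> prob ({\<omega>\<in>space M. x i \<omega> = 1} \<inter> {\<omega>\<in>space M. x j \<omega> = 1}) = p * p"
    and W1: "prob {\<omega>\<in>space M. W \<omega> > 0} = 1"
    and o: "o11 > o12" "o12 \<ge> 0" "o22 > o21" "o21 \<ge> 0"
    and p: "p \<in> {0..1}" and f: "f \<in> {0..1}" and g: "g \<in> {0..1}"
    and G: "Gr o11 o12 o21 o22 p f > Gr o11 o12 o21 o22 p g"
  shows "(\<lambda>n. prob {\<omega>\<in>space M. W \<omega> * Wn o11 o12 o21 o22 x n f \<omega> > V \<omega> * Wn o11 o12 o21 o22 x n g \<omega>}) \<longlonglongrightarrow> 1"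
proof -
  define A where "A = obar1 o11 o12 f"
  define B where "B = obar2 o21 o22 f"
  define C where "C = obar1 o11 o12 g"
  define D where "D = obar2 o21 o22 g"
  have nonneg: "A \<ge> 0" "B \<ge> 0" "C \<ge> 0" "D \<ge> 0"
    using o f g unfolding A_def B_def C_def D_def obar1_def obar2_def
    by (auto intro!: add_nonneg_nonneg mult_nonneg_nonneg)
  define K where "K n \<omega> = card {i\<in>{1..n}. x i \<omega> = 1}" for n \<omega>
  have Wf: "Wn o11 o12 o21 o22 x n f \<omega> = A ^ K n \<omega> * B ^ (n - K n \<omega>)" for n \<omega>
    by (simp add: Wn_eq A_def B_def K_def)
  have Wg: "Wn o11 o12 o21 o22 x n g \<omega> = C ^ K n \<omega> * D ^ (n - K n \<omega>)" for n \<omega>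
    by (simp add: Wn_eq C_def D_def K_def)
  have Kle: "K n \<omega> \<le> n" for n \<omega> unfolding K_def by (rule card_le_n)
  have Wg0: "\<And>n \<omega>. Wn o11 o12 o21 o22 x n g \<omega> \<ge> 0" by (simp add: Wg nonneg)
  have GA: "Gr o11 o12 o21 o22 p f = pw A p * pw B (1 - p)" by (simp add: Gr_def A_def B_def)
  have GC: "Gr o11 o12 o21 o22 p g = pw C p * pw D (1 - p)" by (simp add: Gr_def C_def D_def)
  have key: "\<exists>c S. c > 0 \<and> (\<forall>n. S n \<in> events) \<and> (\<lambda>n. prob (S n)) \<longlonglongrightarrow> 1 \<and>
     eventually (\<lambda>n. \<forall>\<omega>\<in>S n. Wn o11 o12 o21 o22 x n f \<omega> > 0 \<and>
        Wn o11 o12 o21 o22 x n f \<omega> \<ge> Wn o11 o12 o21 o22 x n g \<omega> * exp (real n * c)) sequentially"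
  proof -
    consider "p = 0" | "p = 1" | "0 < p \<and> p < 1" using p by force
    then show ?thesis
    proof cases
      case 1
      have BD: "B > D" using G nonneg GA GC 1 by (simp add: pw_def powr_one)
      define N0 where "N0 = {\<omega>\<in>space M. \<forall>i. x i \<omega> \<noteq> 1}"
      have N0ev: "N0 \<in> events" unfolding N0_def by measurable
      have "AE \<omega> in M. x i \<omega> \<noteq> 1" for i
        using prob_Collect_eq_0[of "\<lambda>\<omega>. x i \<omega> = 1"] bern[of i] 1 by simp
      then have "AE \<omega> in M. \<forall>i. x i \<omega> \<noteq> 1" by (simp add: AE_all_countable)
      then have PN0: "prob N0 = 1" using prob_Collect_eq_1[of "\<lambda>\<omega>. \<forall>i. x i \<omega> \<noteq> 1"] N0ev unfolding N0_def by simp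
      define D' where "D' = max D (B/2)"
      have D': "D' > 0" "D' < B" "D \<le> D'" using BD nonneg unfolding D'_def by auto
      define c where "c = ln (B / D')"
      have c: "c > 0" unfolding c_def using D' by (simp add: ln_gt_zero)
      have "\<forall>\<omega>\<in>N0. Wn o11 o12 o21 o22 x n f \<omega> > 0 \<and>
        Wn o11 o12 o21 o22 x n f \<omega> \<ge> Wn o11 o12 o21 o22 x n g \<omega> * exp (real n * c)" for n
      proof
        fix \<omega> assume "\<omega> \<in> N0"
        then have K0: "K n \<omega> = 0" unfolding N0_def K_def by auto
        have "exp (real n * c) = (B / D') ^ n" unfolding exp_of_nat_mult c_def using D' by simp
        then have "D ^ n * exp (real n * c) = (D * (B / D')) ^ n" by (simp only: power_mult_distrib)
        also have "\<dots> \<le> (D' * (B / D')) ^ n"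
          using D' nonneg by (intro power_mono mult_right_mono) auto
        also have "\<dots> = B ^ n" using D' by simp
        finally show "Wn o11 o12 o21 o22 x n f \<omega> > 0 \<and>
          Wn o11 o12 o21 o22 x n f \<omega> \<ge> Wn o11 o12 o21 o22 x n g \<omega> * exp (real n * c)"
          unfolding Wf Wg K0 using D' by simp
      qed
      then show ?thesis using c N0ev PN0 by (intro exI[of _ c] exI[of _ "\<lambda>n. N0"]) auto
    next
      case 2
      have AC: "A > C" using G nonneg GA GC 2 by (simp add: pw_def powr_one)
      define N1 where "N1 = {\<omega>\<in>space M. \<forall>i. x i \<omega> = 1}"
      have N1ev: "N1 \<in> events" unfolding N1_def by measurable
      have "AE \<omega> in M. x i \<omega> = 1" for i
        using prob_Collect_eq_1[of "\<lambda>\<omega>. x i \<omega> = 1"] bern[of i] 2 by simp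
      then have "AE \<omega> in M. \<forall>i. x i \<omega> = 1" by (simp add: AE_all_countable)
      then have PN1: "prob N1 = 1" using prob_Collect_eq_1[of "\<lambda>\<omega>. \<forall>i. x i \<omega> = 1"] N1ev unfolding N1_def by simp
      define C' where "C' = max C (A/2)"
      have C': "C' > 0" "C' < A" "C \<le> C'" using AC nonneg unfolding C'_def by auto
      define c where "c = ln (A / C')"
      have c: "c > 0" unfolding c_def using C' by (simp add: ln_gt_zero)
      have "\<forall>\<omega>\<in>N1. Wn o11 o12 o21 o22 x n f \<omega> > 0 \<and>
        Wn o11 o12 o21 o22 x n f \<omega> \<ge> Wn o11 o12 o21 o22 x n g \<omega> * exp (real n * c)" for n
      proof
        fix \<omega> assume "\<omega> \<in> N1"
        then have "{i\<in>{1..n}. x i \<omega> = 1} = {1..n}" unfolding N1_def by auto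
        then have Kn: "K n \<omega> = n" unfolding K_def by simp
        have "exp (real n * c) = (A / C') ^ n" unfolding exp_of_nat_mult c_def using C' by simp
        then have "C ^ n * exp (real n * c) = (C * (A / C')) ^ n" by (simp only: power_mult_distrib)
        also have "\<dots> \<le> (C' * (A / C')) ^ n"
          using C' nonneg by (intro power_mono mult_right_mono) auto
        also have "\<dots> = A ^ n" using C' by simp
        finally show "Wn o11 o12 o21 o22 x n f \<omega> > 0 \<and>
          Wn o11 o12 o21 o22 x n f \<omega> \<ge> Wn o11 o12 o21 o22 x n g \<omega> * exp (real n * c)"
          unfolding Wf Wg Kn using C' by simp
      qed
      then show ?thesis using c N1ev PN1 by (intro exI[of _ c] exI[of _ "\<lambda>n. N1"]) auto
    next
      case 3
      have GA': "Gr o11 o12 o21 o22 p f = A powr p * B powr (1 - p)" using GA 3 by (simp add: pw_def)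
      have GC': "Gr o11 o12 o21 o22 p g = C powr p * D powr (1 - p)" using GC 3 by (simp add: pw_def)
      have Gg0: "Gr o11 o12 o21 o22 p g \<ge> 0" unfolding GC' by simp
      have AB: "A > 0" "B > 0" using G Gg0 nonneg GA' by (auto simp: order.strict_iff_order)
      define S where "S \<epsilon> n = {\<omega>\<in>space M. \<bar>real (card {i\<in>{1..n}. x i \<omega> = 1}) - real n * p\<bar> < real n * \<epsilon>}" for \<epsilon> n
      have Sev: "S \<epsilon> n \<in> events" for \<epsilon> n unfolding S_def by measurable
      have PS: "(\<lambda>n. prob (S \<epsilon> n)) \<longlonglongrightarrow> 1" if "\<epsilon> > 0" for \<epsilon>
        unfolding S_def by (rule wlln[OF xm bern pair that])
      show ?thesis
      proof (cases "C = 0 \<or> D = 0")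
        case True
        define \<epsilon> where "\<epsilon> = min p (1-p) / 2"
        have e: "\<epsilon> > 0" unfolding \<epsilon>_def using 3 by simp
        have "\<forall>\<omega>\<in>S \<epsilon> n. Wn o11 o12 o21 o22 x n f \<omega> > 0 \<and>
          Wn o11 o12 o21 o22 x n f \<omega> \<ge> Wn o11 o12 o21 o22 x n g \<omega> * exp (real n * 1)" if n: "n \<ge> 1" for n
        proof
          fix \<omega> assume "\<omega> \<in> S \<epsilon> n"
          then have "\<bar>real (K n \<omega>) - real n * p\<bar> < real n * \<epsilon>" unfolding S_def K_def by auto
          from K_bounds[OF _ _ \<epsilon>_def this] 3 n have "0 < real (K n \<omega>)" "real (K n \<omega>) < real n" by auto
          then have "K n \<omega> \<noteq> 0" "n - K n \<omega> \<noteq> 0" by auto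
          then have "Wn o11 o12 o21 o22 x n g \<omega> = 0" unfolding Wg using True by auto
          then show "Wn o11 o12 o21 o22 x n f \<omega> > 0 \<and>
            Wn o11 o12 o21 o22 x n f \<omega> \<ge> Wn o11 o12 o21 o22 x n g \<omega> * exp (real n * 1)"
            unfolding Wf using AB by simp
        qed
        then have "eventually (\<lambda>n. \<forall>\<omega>\<in>S \<epsilon> n. Wn o11 o12 o21 o22 x n f \<omega> > 0 \<and>
          Wn o11 o12 o21 o22 x n f \<omega> \<ge> Wn o11 o12 o21 o22 x n g \<omega> * exp (real n * 1)) sequentially"
          using eventually_sequentially by blast
        then show ?thesis using Sev PS[OF e] by (intro exI[of _ 1] exI[of _ "S \<epsilon>"]) auto
      next
        case False
        then have CD: "C > 0" "D > 0" using nonneg by auto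
        define \<alpha> where "\<alpha> = ln A - ln C"
        define \<beta> where "\<beta> = ln B - ln D"
        define \<delta> where "\<delta> = p*\<alpha> + (1-p)*\<beta>"
        have lnGf: "ln (Gr o11 o12 o21 o22 p f) = p * ln A + (1-p) * ln B"
          unfolding GA' using AB by (simp add: ln_mult)
        have lnGg: "ln (Gr o11 o12 o21 o22 p g) = p * ln C + (1-p) * ln D"
          unfolding GC' using CD by (simp add: ln_mult)
        have "Gr o11 o12 o21 o22 p g > 0" unfolding GC' using CD by simp
        then have "ln (Gr o11 o12 o21 o22 p g) < ln (Gr o11 o12 o21 o22 p f)" using G by simp
        then have d: "\<delta> > 0" unfolding lnGf lnGg \<delta>_def \<alpha>_def \<beta>_def by (simp add: algebra_simps)
        define \<epsilon> where "\<epsilon> = \<delta>/(2*(\<bar>\<alpha>\<bar>+\<bar>\<beta>\<bar>+1))"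
        have e: "\<epsilon> > 0" unfolding \<epsilon>_def using d by (simp add: add_nonneg_pos)
        have "\<forall>\<omega>\<in>S \<epsilon> n. Wn o11 o12 o21 o22 x n f \<omega> > 0 \<and>
          Wn o11 o12 o21 o22 x n f \<omega> \<ge> Wn o11 o12 o21 o22 x n g \<omega> * exp (real n * (\<delta>/2))" for n
        proof
          fix \<omega> assume "\<omega> \<in> S \<epsilon> n"
          then have "\<bar>real (K n \<omega>) - real n * p\<bar> < real n * \<epsilon>" unfolding S_def K_def by auto
          from log_ineq[OF \<delta>_def d \<epsilon>_def this] have li:
            "real n * (\<delta>/2) \<le> real (K n \<omega>) * \<alpha> + (real n - real (K n \<omega>)) * \<beta>" by simp
          have rK: "real (n - K n \<omega>) = real n - real (K n \<omega>)" using Kle[of n \<omega>] by simp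
          have eA: "A ^ K n \<omega> * B ^ (n - K n \<omega>) = exp (real (K n \<omega>) * ln A + (real n - real (K n \<omega>)) * ln B)"
            using AB by (simp add: exp_add exp_of_nat_mult rK[symmetric])
          have eC: "C ^ K n \<omega> * D ^ (n - K n \<omega>) * exp (real n * (\<delta>/2)) =
              exp (real (K n \<omega>) * ln C + (real n - real (K n \<omega>)) * ln D + real n * (\<delta>/2))"
            using CD by (simp add: exp_add exp_of_nat_mult rK[symmetric])
          have "real (K n \<omega>) * ln C + (real n - real (K n \<omega>)) * ln D + real n * (\<delta>/2) \<le>
                real (K n \<omega>) * ln A + (real n - real (K n \<omega>)) * ln B"
            using li unfolding \<alpha>_def \<beta>_def by (simp add: algebra_simps)
          then show "Wn o11 o12 o21 o22 x n f \<omega> > 0 \<and>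
            Wn o11 o12 o21 o22 x n f \<omega> \<ge> Wn o11 o12 o21 o22 x n g \<omega> * exp (real n * (\<delta>/2))"
            unfolding Wf Wg eA eC by simp
        qed
        then show ?thesis using Sev PS[OF e] d by (intro exI[of _ "\<delta>/2"] exI[of _ "S \<epsilon>"]) auto
      qed
    qed
  qed
  then obtain c S where c: "c > 0" and S: "\<And>n. S n \<in> events" "(\<lambda>n. prob (S n)) \<longlonglongrightarrow> 1"
    and ev: "eventually (\<lambda>n. \<forall>\<omega>\<in>S n. Wn o11 o12 o21 o22 x n f \<omega> > 0 \<and>
        Wn o11 o12 o21 o22 x n f \<omega> \<ge> Wn o11 o12 o21 o22 x n g \<omega> * exp (real n * c)) sequentially"
    by blast
  show ?thesis
    by (rule wrapper[OF Wm Vm Wn_meas[OF xm] Wn_meas[OF xm] W1 Wg0 c S ev])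
qed


lemma unif_pos:
  fixes Z :: "'a \<Rightarrow> real"
  assumes Zm: "Z \<in> borel_measurable M" and d: "distr M lborel Z = uniform_measure lborel {0..a}" and a: "a > 0"
  shows "prob {\<omega>\<in>space M. Z \<omega> > 0} = 1"
proof -
  have Zl: "Z \<in> measurable M lborel" using Zm by simp
  have "prob {\<omega>\<in>space M. Z \<omega> > 0} = measure (distr M lborel Z) {0<..}"
    by (subst measure_distr[OF Zl]) (auto intro!: arg_cong[where f=prob])
  also have "\<dots> = measure lborel ({0..a} \<inter> {0<..}) / measure lborel {0..a}"
    unfolding d using a by (subst measure_uniform_measure) auto
  also have "{0..a} \<inter> {0<..} = {0<..a::real}" by auto
  also have "measure lborel {0<..a::real} / measure lborel {0..a} = 1" using a by simp
  finally show ?thesis .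
qed

end

theorem proposition7:
  fixes M :: "'a measure"
    and x :: "nat \<Rightarrow> 'a \<Rightarrow> real"
    and W0 V0 :: "'a \<Rightarrow> real"
    and o11 o12 o21 o22 p a f g :: real
  assumes "prob_space M"
    and "o11 > o12" "o12 \<ge> 0" "o22 > o21" "o21 \<ge> 0" "o11 > 1" "o22 > 1"
    and "p \<in> {0..1}"
    and "a > 0"
    and x_vals: "\<And>i \<omega>. \<omega> \<in> space M \<Longrightarrow> x i \<omega> \<in> {0, 1}"
    and x_bern: "\<And>i. measure M {\<omega> \<in> space M. x i \<omega> = 1} = p"
    and W0_unif: "distr M lborel W0 = uniform_measure lborel {0..a}"
    and V0_unif: "distr M lborel V0 = uniform_measure lborel {0..a}"
    and indep: "prob_space.indep_vars M (\<lambda>_. borel)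
                  (case_sum x (\<lambda>b. if b then W0 else V0)) UNIV"
    and "f \<in> {0..1}" "g \<in> {0..1}"
    and "Gr o11 o12 o21 o22 p f \<noteq> Gr o11 o12 o21 o22 p g"
  shows "(\<lambda>n. measure M {\<omega> \<in> space M.
            W0 \<omega> * Wn o11 o12 o21 o22 x n f \<omega> > V0 \<omega> * Wn o11 o12 o21 o22 x n g \<omega>})
         \<longlonglongrightarrow> (if Gr o11 o12 o21 o22 p f > Gr o11 o12 o21 o22 p g then 1 else 0)"
proof -
  interpret prob_space M by fact
  define Y where "Y = case_sum x (\<lambda>b. if b then W0 else V0)"
  have rv: "\<And>k. random_variable borel (Y k)"
    and ind: "indep_sets (\<lambda>k. {Y k -` A \<inter> space M | A. A \<in> sets borel}) UNIV"
    using indep unfolding indep_vars_def2 Y_def by auto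
  have xm[measurable]: "x i \<in> borel_measurable M" for i using rv[of "Inl i"] by (simp add: Y_def)
  have W0m[measurable]: "W0 \<in> borel_measurable M" using rv[of "Inr True"] by (simp add: Y_def)
  have V0m[measurable]: "V0 \<in> borel_measurable M" using rv[of "Inr False"] by (simp add: Y_def)
  have pair: "prob ({\<omega>\<in>space M. x i \<omega> = 1} \<inter> {\<omega>\<in>space M. x j \<omega> = 1}) = p * p" if ij: "i \<noteq> j" for i j
  proof -
    define B where "B k = Y k -` {1} \<inter> space M" for k
    have "prob (\<Inter>k\<in>{Inl i, Inl j}. B k) = (\<Prod>k\<in>{Inl i, Inl j}. prob (B k))"
      by (rule indep_setsD[OF ind]) (auto simp: B_def)
    moreover have "B (Inl i) = {\<omega>\<in>space M. x i \<omega> = 1}" "B (Inl j) = {\<omega>\<in>space M. x j \<omega> = 1}"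
      by (auto simp: B_def Y_def)
    ultimately show ?thesis using ij x_bern by simp
  qed
  have W1: "prob {\<omega>\<in>space M. W0 \<omega> > 0} = 1" by (rule unif_pos[OF W0m W0_unif \<open>a > 0\<close>])
  have V1: "prob {\<omega>\<in>space M. V0 \<omega> > 0} = 1" by (rule unif_pos[OF V0m V0_unif \<open>a > 0\<close>])
  show ?thesis
  proof (cases "Gr o11 o12 o21 o22 p f > Gr o11 o12 o21 o22 p g")
    case True
    show ?thesis using True
      by (simp add: main[OF xm W0m V0m x_bern pair W1 assms(2-5) assms(8) assms(15,16) True])
  next
    case False
    then have Lt: "Gr o11 o12 o21 o22 p g > Gr o11 o12 o21 o22 p f" using assms(17) by simp
    have L: "(\<lambda>n. prob {\<omega>\<in>space M. V0 \<omega> * Wn o11 o12 o21 o22 x n g \<omega> > W0 \<omega> * Wn o11 o12 o21 o22 x n f \<omega>}) \<longlonglongrightarrow> 1"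
      by (rule main[OF xm V0m W0m x_bern pair V1 assms(2-5) assms(8) assms(16,15) Lt])
    have "(\<lambda>n. prob {\<omega>\<in>space M. W0 \<omega> * Wn o11 o12 o21 o22 x n f \<omega> > V0 \<omega> * Wn o11 o12 o21 o22 x n g \<omega>}) \<longlonglongrightarrow> 0"
    proof (rule tendsto_sandwich[where f="\<lambda>n. 0" and h="\<lambda>n. 1 - prob {\<omega>\<in>space M. V0 \<omega> * Wn o11 o12 o21 o22 x n g \<omega> > W0 \<omega> * Wn o11 o12 o21 o22 x n f \<omega>}"])
      show "eventually (\<lambda>n. (0::real) \<le> prob {\<omega>\<in>space M. W0 \<omega> * Wn o11 o12 o21 o22 x n f \<omega> > V0 \<omega> * Wn o11 o12 o21 o22 x n g \<omega>}) sequentially"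
        by simp
      have "prob {\<omega>\<in>space M. W0 \<omega> * Wn o11 o12 o21 o22 x n f \<omega> > V0 \<omega> * Wn o11 o12 o21 o22 x n g \<omega>}
          \<le> 1 - prob {\<omega>\<in>space M. V0 \<omega> * Wn o11 o12 o21 o22 x n g \<omega> > W0 \<omega> * Wn o11 o12 o21 o22 x n f \<omega>}" for n
      proof -
        have ev: "{\<omega>\<in>space M. V0 \<omega> * Wn o11 o12 o21 o22 x n g \<omega> > W0 \<omega> * Wn o11 o12 o21 o22 x n f \<omega>} \<in> events"
          by measurable
        have "prob {\<omega>\<in>space M. W0 \<omega> * Wn o11 o12 o21 o22 x n f \<omega> > V0 \<omega> * Wn o11 o12 o21 o22 x n g \<omega>}
          \<le> prob (space M - {\<omega>\<in>space M. V0 \<omega> * Wn o11 o12 o21 o22 x n g \<omega> > W0 \<omega> * Wn o11 o12 o21 o22 x n f \<omega>})"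
          using ev by (intro finite_measure_mono) auto
        then show ?thesis using prob_compl[OF ev] by simp
      qed
      then show "eventually (\<lambda>n. prob {\<omega>\<in>space M. W0 \<omega> * Wn o11 o12 o21 o22 x n f \<omega> > V0 \<omega> * Wn o11 o12 o21 o22 x n g \<omega>}
          \<le> 1 - prob {\<omega>\<in>space M. V0 \<omega> * Wn o11 o12 o21 o22 x n g \<omega> > W0 \<omega> * Wn o11 o12 o21 o22 x n f \<omega>}) sequentially"
        by simp
      show "(\<lambda>n. 0::real) \<longlonglongrightarrow> 0" by simp
      show "(\<lambda>n. 1 - prob {\<omega>\<in>space M. V0 \<omega> * Wn o11 o12 o21 o22 x n g \<omega> > W0 \<omega> * Wn o11 o12 o21 o22 x n f \<omega>}) \<longlonglongrightarrow> 0"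
        using tendsto_diff[OF tendsto_const[of "1::real"] L] by simp
    qed
    then show ?thesis using False by simp
  qed
qed

end
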